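(* There is an absolute constant $C_5$ such that the following holds for all $p\in(0,0.1)$. Let $R_1,\dots,R_{n+1}$ be a good sequence of rectangles with $\dim(R_1)=(a_1,b_1)$, let $a_0=b_0:=A$, $s_0:=a_1-a_0$, $t_0:=b_1-b_0$. Then $$\mathbb{P}_p\big[G(R_1)\big]\le \exp\big[-s_0\,g(b_0q)-t_0\,g(a_0q)+C_5q^{-1/2}\log q^{-1}\big].$$
   Context: $q=-\log(1-p)$, $A=\lceil 1/\sqrt q\rceil$, $B=\lfloor q^{-1}\log q^{-1}\rfloor$; $\beta(u)=\frac{u+\sqrt{u(4-3u)}}{2}$, $g(z)=-\log\beta(1-e^{-z})$. Under $\mathbb{P}_p$ the initial configuration assigns independent states to sites of $\mathbb{Z}^2$: the origin is active with probability $p$, else empty; every other site is occupied with probability $p$, else empty. A rectangle is $\{a,\dots,c\}\times\{b,\dots,d\}\subset\mathbb{Z}^2$ with dimensions $(c-a+1,d-b+1)$; columns are $\{x\}\times\{b,\dots,d\}$, rows $\{a,\dots,c\}\times\{y\}$. A double gap in the columns (rows) is a pair of consecutive columns (rows) consisting entirely of initially empty sites; $G(R)$ is the event that $R$ has no double gap in the columns or rows. A sequence of rectangles $R_1,\dots,R_{n+1}$ ($n\ge1$) with $\dim(R_i)=(a_i,b_i)$, $s_i=a_{i+1}-a_i$, $t_i=b_{i+1}-b_i$ is good if: (i) $0\in R_1\subseteq\dots\subseteq R_{n+1}$; (ii) $\min(a_1,b_1)\in[A,A+3]$; (iii) $a_n+b_n\le B$; (iv) $a_{n+1}+b_{n+1}>B$;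 (v) for $i=1,\dots,n$, $s_i\ge a_i\sqrt q$ or $t_i\ge b_i\sqrt q$; (vi) for $i=1,\dots,n$, $s_i<a_i\sqrt q+4$ and $t_i<b_i\sqrt q+4$. *)

theory Defs
  imports "HOL-Probability.Probability"
begin

definition qq :: "real \<Rightarrow> real" where "qq p = - ln (1 - p)"
definition AA :: "real \<Rightarrow> int" where "AA p = \<lceil>1 / sqrt (qq p)\<rceil>"
definition BB :: "real \<Rightarrow> int" where "BB p = \<lfloor>(1 / qq p) * ln (1 / qq p)\<rfloor>"

definition beta :: "real \<Rightarrow> real" where "beta u = (u + sqrt (u * (4 - 3 * u))) / 2"
definition gfun :: "real \<Rightarrow> real" where "gfun z = - ln (beta (1 - exp (- z)))"

datatype site_state = Empty | Occupied | Active

definition site_pmf :: "real \<Rightarrow> int \<times> int \<Rightarrow> site_state pmf" where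
  "site_pmf p x = map_pmf (\<lambda>b. if b then (if x = (0, 0) then Active else Occupied) else Empty)
                          (bernoulli_pmf p)"

definition Pp :: "real \<Rightarrow> ((int \<times> int) \<Rightarrow> site_state) measure" where
  "Pp p = PiM UNIV (\<lambda>x. measure_pmf (site_pmf p x))"

type_synonym rect = "int \<times> int \<times> int \<times> int"

definition rset :: "rect \<Rightarrow> (int \<times> int) set" where
  "rset R = (case R of (a, b, c, d) \<Rightarrow> {a..c} \<times> {b..d})"

definition rwidth :: "rect \<Rightarrow> int" where
  "rwidth R = (case R of (a, b, c, d) \<Rightarrow> c - a + 1)"

definition rheight :: "rect \<Rightarrow> int" where
  "rheight R = (case R of (a, b, c, d) \<Rightarrow> d - b + 1)"

definition double_gap_cols :: "rect \<Rightarrow> ((int \<times> int) \<Rightarrow> site_state) \<Rightarrow> bool" where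
  "double_gap_cols R \<omega> = (case R of (a, b, c, d) \<Rightarrow>
     (\<exists>x. a \<le> x \<and> x + 1 \<le> c \<and> (\<forall>y\<in>{b..d}. \<omega> (x, y) = Empty \<and> \<omega> (x + 1, y) = Empty)))"

definition double_gap_rows :: "rect \<Rightarrow> ((int \<times> int) \<Rightarrow> site_state) \<Rightarrow> bool" where
  "double_gap_rows R \<omega> = (case R of (a, b, c, d) \<Rightarrow>
     (\<exists>y. b \<le> y \<and> y + 1 \<le> d \<and> (\<forall>x\<in>{a..c}. \<omega> (x, y) = Empty \<and> \<omega> (x, y + 1) = Empty)))"

definition G_event :: "rect \<Rightarrow> ((int \<times> int) \<Rightarrow> site_state) set" where
  "G_event R = {\<omega>. \<not> double_gap_cols R \<omega> \<and> \<not> double_gap_rows R \<omega>}"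

text \<open>Good sequence R 1, ..., R (n+1) (indices 1..n+1 of R are used).\<close>
definition good_seq :: "real \<Rightarrow> nat \<Rightarrow> (nat \<Rightarrow> rect) \<Rightarrow> bool" where
  "good_seq p n R \<longleftrightarrow> n \<ge> 1
    \<and> (0, 0) \<in> rset (R 1)
    \<and> (\<forall>i\<in>{1..n}. rset (R i) \<subseteq> rset (R (i + 1)))
    \<and> min (rwidth (R 1)) (rheight (R 1)) \<in> {AA p..AA p + 3}
    \<and> rwidth (R n) + rheight (R n) \<le> BB p
    \<and> rwidth (R (n + 1)) + rheight (R (n + 1)) > BB p
    \<and> (\<forall>i\<in>{1..n}.
         let s = rwidth (R (i + 1)) - rwidth (R i); t = rheight (R (i + 1)) - rheight (R i)
         in (real_of_int s \<ge> rwidth (R i) * sqrt (qq p) \<or> real_of_int t \<ge> rheight (R i) * sqrt (qq p))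
          \<and> real_of_int s < rwidth (R i) * sqrt (qq p) + 4
          \<and> real_of_int t < rheight (R i) * sqrt (qq p) + 4)"

end

theory Submission
  imports Defs
begin



lemma pred_allEmpty:
  assumes "finite K"
  shows "(\<lambda>g. \<forall>x\<in>K. g x = Empty) \<in> measurable (PiM K (\<lambda>x. measure_pmf (site_pmf p x))) (count_space UNIV)"
proof -
  have "Measurable.pred (PiM K (\<lambda>x. measure_pmf (site_pmf p x))) (\<lambda>g. \<forall>x\<in>K. g x = Empty)"
  proof (rule pred_intros_finite(3)[where P="\<lambda>g x. g x = Empty", OF assms])
    fix x assume x: "x \<in> K"
    have "(\<lambda>s::site_state. s = Empty) \<in> measurable (measure_pmf (site_pmf p x)) (count_space UNIV)"
      by simp
    from measurable_compose[OF measurable_component_singleton[OF x, of "\<lambda>x. measure_pmf (site_pmf p x)"] this]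
    show "Measurable.pred (PiM K (\<lambda>x. measure_pmf (site_pmf p x))) (\<lambda>g. g x = Empty)" by simp
  qed
  then show ?thesis by simp
qed

lemma sets_PiM_bool_all:
  fixes A :: "nat set"
  assumes "finite A" "S \<subseteq> space (PiM A (\<lambda>_. count_space (UNIV::bool set)))"
  shows "S \<in> sets (PiM A (\<lambda>_. count_space (UNIV::bool set)))"
proof -
  have fin: "finite (space (PiM A (\<lambda>_. count_space (UNIV::bool set))))"
    using assms(1) by (simp add: space_PiM finite_PiE)
  have "S = (\<Union>v\<in>S. {v})" by auto
  also have "\<dots> \<in> sets (PiM A (\<lambda>_. count_space (UNIV::bool set)))"
  proof (rule sets.finite_UN)
    show "finite S" using finite_subset[OF assms(2) fin] .
  next
    fix v assume "v \<in> S"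
    then have v: "v \<in> PiE A (\<lambda>_. UNIV)" using assms(2) by (auto simp: space_PiM)
    then have "{v} = PiE A (\<lambda>i. {v i})"
      by (auto simp: PiE_iff extensional_def fun_eq_iff)
    then show "{v} \<in> sets (PiM A (\<lambda>_. count_space (UNIV::bool set)))"
      using sets_PiM_I_finite[OF assms(1), of "\<lambda>i. {v i}" "\<lambda>_. count_space UNIV"] by simp
  qed
  finally show ?thesis .
qed

lemma (in prob_space) indep_block:
  fixes X :: "nat \<Rightarrow> 'a \<Rightarrow> bool"
  assumes ind: "indep_vars (\<lambda>_. count_space UNIV) X UNIV"
  shows "prob {\<omega>\<in>space M. \<Phi> (restrict (\<lambda>i. X i \<omega>) {..<k}) \<and> X k \<omega> = b}
       = prob {\<omega>\<in>space M. \<Phi> (restrict (\<lambda>i. X i \<omega>) {..<k})} * prob {\<omega>\<in>space M. X k \<omega> = b}"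
proof -
  have iv: "indep_var (PiM {..<k} (\<lambda>_. count_space UNIV)) (\<lambda>\<omega>. restrict (\<lambda>i. X i \<omega>) {..<k})
                       (PiM {k} (\<lambda>_. count_space UNIV)) (\<lambda>\<omega>. restrict (\<lambda>i. X i \<omega>) {k})"
    by (rule indep_var_restrict[OF ind]) auto
  let ?Sa = "{v \<in> space (PiM {..<k} (\<lambda>_. count_space (UNIV::bool set))). \<Phi> v}"
  let ?Sb = "{v \<in> space (PiM {k} (\<lambda>_. count_space (UNIV::bool set))). v k = b}"
  have sa: "?Sa \<in> sets (PiM {..<k} (\<lambda>_. count_space (UNIV::bool set)))"
    by (rule sets_PiM_bool_all) auto
  have sb: "?Sb \<in> sets (PiM {k} (\<lambda>_. count_space (UNIV::bool set)))"
    by (rule sets_PiM_bool_all) auto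
  have eq: "prob ((\<lambda>x. (restrict (\<lambda>i. X i x) {..<k}, restrict (\<lambda>i. X i x) {k})) -` (?Sa \<times> ?Sb) \<inter> space M)
     = prob ((\<lambda>\<omega>. restrict (\<lambda>i. X i \<omega>) {..<k}) -` ?Sa \<inter> space M) * prob ((\<lambda>\<omega>. restrict (\<lambda>i. X i \<omega>) {k}) -` ?Sb \<inter> space M)"
    by (rule indep_varD[OF iv sa sb])
  have e1: "(\<lambda>x. (restrict (\<lambda>i. X i x) {..<k}, restrict (\<lambda>i. X i x) {k})) -` (?Sa \<times> ?Sb) \<inter> space M
      = {\<omega>\<in>space M. \<Phi> (restrict (\<lambda>i. X i \<omega>) {..<k}) \<and> X k \<omega> = b}"
    by (auto simp: space_PiM)
  have e2: "(\<lambda>\<omega>. restrict (\<lambda>i. X i \<omega>) {..<k}) -` ?Sa \<inter> space M = {\<omega>\<in>space M. \<Phi> (restrict (\<lambda>i. X i \<omega>) {..<k})}"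
    by (auto simp: space_PiM)
  have e3: "(\<lambda>\<omega>. restrict (\<lambda>i. X i \<omega>) {k}) -` ?Sb \<inter> space M = {\<omega>\<in>space M. X k \<omega> = b}"
    by (auto simp: space_PiM)
  show ?thesis using eq e1 e2 e3 by simp
qed

lemma (in prob_space) block_event:
  fixes X :: "nat \<Rightarrow> 'a \<Rightarrow> bool"
  assumes ind: "indep_vars (\<lambda>_. count_space UNIV) X UNIV"
  shows "{\<omega>\<in>space M. \<Phi> (restrict (\<lambda>i. X i \<omega>) {..<k})} \<in> events"
proof -
  have m: "(\<lambda>\<omega>. restrict (\<lambda>i. X i \<omega>) {..<k}) \<in> measurable M (PiM {..<k} (\<lambda>_. count_space (UNIV::bool set)))"
    using ind by (intro measurable_restrict) (auto simp: indep_vars_def)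
  have sa: "{v \<in> space (PiM {..<k} (\<lambda>_. count_space (UNIV::bool set))). \<Phi> v} \<in> sets (PiM {..<k} (\<lambda>_. count_space (UNIV::bool set)))"
    by (rule sets_PiM_bool_all) auto
  have "(\<lambda>\<omega>. restrict (\<lambda>i. X i \<omega>) {..<k}) -` {v \<in> space (PiM {..<k} (\<lambda>_. count_space (UNIV::bool set))). \<Phi> v} \<inter> space M
    = {\<omega>\<in>space M. \<Phi> (restrict (\<lambda>i. X i \<omega>) {..<k})}"
    by (auto simp: space_PiM)
  with measurable_sets[OF m sa] show ?thesis by simp
qed

definition nc :: "nat \<Rightarrow> (nat \<Rightarrow> bool) \<Rightarrow> bool" where
  "nc n v \<longleftrightarrow> (\<forall>i. Suc i < n \<longrightarrow> \<not> (v i \<and> v (Suc i)))"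

lemma (in prob_space) no_consec_bound:
  fixes X :: "nat \<Rightarrow> 'a \<Rightarrow> bool" and u lam :: real
  assumes ind: "indep_vars (\<lambda>_. count_space UNIV) X UNIV"
    and pX: "\<And>i. prob {\<omega>\<in>space M. X i \<omega> = True} = 1 - u"
    and u: "0 \<le> u" "u \<le> 1" and lam: "0 < lam" "lam \<le> 1" "lam^2 = u*lam + u*(1-u)"
  shows "lam * prob {\<omega>\<in>space M. nc n (\<lambda>i. X i \<omega>)} \<le> lam ^ n"
proof -
  define f where "f n = prob {\<omega>\<in>space M. nc n (\<lambda>i. X i \<omega>)}" for n
  have restr: "{\<omega>\<in>space M. \<Phi> (restrict (\<lambda>i. X i \<omega>) {..<k})} = {\<omega>\<in>space M. \<Psi> (\<lambda>i. X i \<omega>)}"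
    if "\<And>v. \<Phi> (restrict v {..<k}) = \<Psi> v" for \<Phi> \<Psi> k
  proof -
    have "\<Phi> (restrict (\<lambda>i. X i \<omega>) {..<k}) = \<Psi> (\<lambda>i. X i \<omega>)" for \<omega> by (rule that)
    then show ?thesis by simp
  qed
  have ncr1: "nc k (restrict v {..<k}) = nc k v" for k v
    by (auto simp: nc_def)
  have ncr2: "nc k (restrict v {..<Suc k}) = nc k v" for k v
    by (auto simp: nc_def)
  have ncr3: "(nc k (restrict v {..<Suc k}) \<and> \<not> restrict v {..<Suc k} k) = (nc k v \<and> \<not> v k)" for k v
    by (auto simp: nc_def)
  have evF: "{\<omega>\<in>space M. nc k (\<lambda>i. X i \<omega>)} \<in> events" for k
    using block_event[OF ind, of "nc k" k] restr[of "nc k" k "nc k"] ncr1 by simp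
  have evF2: "{\<omega>\<in>space M. nc k (\<lambda>i. X i \<omega>) \<and> \<not> X k \<omega>} \<in> events" for k
    using block_event[OF ind, of "\<lambda>v. nc k v \<and> \<not> v k" "Suc k"]
      restr[of "\<lambda>v. nc k v \<and> \<not> v k" "Suc k" "\<lambda>v. nc k v \<and> \<not> v k"] ncr3 by simp
  have evX: "{\<omega>\<in>space M. X i \<omega> = b} \<in> events" for i b
  proof -
    have m: "X i \<in> measurable M (count_space UNIV)" using ind by (auto simp: indep_vars_def)
    have "X i -` {b} \<inter> space M = {\<omega>\<in>space M. X i \<omega> = b}" by auto
    with measurable_sets[OF m, of "{b}"] show ?thesis by simp
  qed
  have pF: "prob {\<omega>\<in>space M. X i \<omega> = False} = u" for i
  proof -
    have "{\<omega>\<in>space M. X i \<omega> = False} = space M - {\<omega>\<in>space M. X i \<omega> = True}" by auto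
    moreover have "{\<omega>\<in>space M. X i \<omega> = True} \<in> events"
      by (rule evX)
    ultimately show ?thesis using prob_compl pX[of i] by simp
  qed
  have indA: "prob {\<omega>\<in>space M. nc k (\<lambda>i. X i \<omega>) \<and> X k \<omega> = b} = f k * prob {\<omega>\<in>space M. X k \<omega> = b}" for k b
  proof -
    have "{\<omega>\<in>space M. nc k (\<lambda>i. X i \<omega>) \<and> X k \<omega> = b} = {\<omega>\<in>space M. nc k (restrict (\<lambda>i. X i \<omega>) {..<k}) \<and> X k \<omega> = b}"
      by (simp add: ncr1)
    moreover have "{\<omega>\<in>space M. nc k (\<lambda>i. X i \<omega>)} = {\<omega>\<in>space M. nc k (restrict (\<lambda>i. X i \<omega>) {..<k})}"
      by (simp add: ncr1)
    ultimately show ?thesis using indep_block[OF ind, of "nc k" k b] by (simp add: f_def)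
  qed
  have indB: "prob {\<omega>\<in>space M. (nc k (\<lambda>i. X i \<omega>) \<and> \<not> X k \<omega>) \<and> X (Suc k) \<omega> = True} = f k * u * (1 - u)" for k
  proof -
    have "{\<omega>\<in>space M. (nc k (\<lambda>i. X i \<omega>) \<and> \<not> X k \<omega>) \<and> X (Suc k) \<omega> = True}
       = {\<omega>\<in>space M. (\<lambda>v. nc k v \<and> \<not> v k) (restrict (\<lambda>i. X i \<omega>) {..<Suc k}) \<and> X (Suc k) \<omega> = True}"
      by (simp add: ncr2)
    moreover have "{\<omega>\<in>space M. (\<lambda>v. nc k v \<and> \<not> v k) (restrict (\<lambda>i. X i \<omega>) {..<Suc k})}
       = {\<omega>\<in>space M. nc k (\<lambda>i. X i \<omega>) \<and> X k \<omega> = False}"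
      by (simp add: ncr2)
    ultimately show ?thesis
      using indep_block[OF ind, of "\<lambda>v. nc k v \<and> \<not> v k" "Suc k" True] indA[of k False] pF pX
      by simp
  qed
  have rec: "f (Suc (Suc k)) \<le> f (Suc k) * u + f k * u * (1 - u)" for k
  proof -
    let ?A = "{\<omega>\<in>space M. nc (Suc k) (\<lambda>i. X i \<omega>) \<and> X (Suc k) \<omega> = False}"
    let ?B = "{\<omega>\<in>space M. (nc k (\<lambda>i. X i \<omega>) \<and> \<not> X k \<omega>) \<and> X (Suc k) \<omega> = True}"
    have sub: "{\<omega>\<in>space M. nc (Suc (Suc k)) (\<lambda>i. X i \<omega>)} \<subseteq> ?A \<union> ?B"
    proof
      fix \<omega> assume "\<omega> \<in> {\<omega>\<in>space M. nc (Suc (Suc k)) (\<lambda>i. X i \<omega>)}"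
      then have s: "\<omega> \<in> space M" and n: "nc (Suc (Suc k)) (\<lambda>i. X i \<omega>)" by auto
      show "\<omega> \<in> ?A \<union> ?B"
      proof (cases "X (Suc k) \<omega>")
        case True
        with n have "\<not> X k \<omega>" by (auto simp: nc_def)
        moreover have "nc k (\<lambda>i. X i \<omega>)" using n by (auto simp: nc_def)
        ultimately show ?thesis using s True by auto
      next
        case False
        moreover have "nc (Suc k) (\<lambda>i. X i \<omega>)" using n by (auto simp: nc_def)
        ultimately show ?thesis using s by auto
      qed
    qed
    have evA: "?A \<in> events"
    proof -
      have "?A = {\<omega>\<in>space M. nc (Suc k) (\<lambda>i. X i \<omega>)} \<inter> {\<omega>\<in>space M. X (Suc k) \<omega> = False}" by auto
      moreover have "{\<omega>\<in>space M. X (Suc k) \<omega> = False} \<in> events"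
        by (rule evX)
      ultimately show ?thesis using evF by auto
    qed
    have evB: "?B \<in> events"
    proof -
      have "?B = {\<omega>\<in>space M. nc k (\<lambda>i. X i \<omega>) \<and> \<not> X k \<omega>} \<inter> {\<omega>\<in>space M. X (Suc k) \<omega> = True}" by auto
      moreover have "{\<omega>\<in>space M. X (Suc k) \<omega> = True} \<in> events"
        by (rule evX)
      ultimately show ?thesis using evF2 by auto
    qed
    have "f (Suc (Suc k)) \<le> prob (?A \<union> ?B)"
      unfolding f_def by (rule finite_measure_mono[OF sub]) (use evA evB in auto)
    also have "\<dots> \<le> prob ?A + prob ?B"
      by (rule measure_Un_le[OF evA evB])
    also have "prob ?A = f (Suc k) * u" using indA[of "Suc k" False] pF by simp
    also have "prob ?B = f k * u * (1 - u)" by (rule indB)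
    finally show ?thesis .
  qed
  have f01: "f 0 \<le> 1" "f (Suc 0) \<le> 1" unfolding f_def by simp_all
  have fnn: "0 \<le> f k" for k unfolding f_def by simp
  have "lam * f n \<le> lam ^ n"
  proof (induction n rule: less_induct)
    case (less n)
    show ?case
    proof (cases n)
      case 0 then show ?thesis using f01 fnn[of 0] lam by (simp add: mult_le_one)
    next
      case (Suc m)
      show ?thesis
      proof (cases m)
        case 0 then show ?thesis using Suc f01 fnn[of 1] lam by (simp add: mult_left_le)
      next
        case (Suc k)
        have h1: "lam * f (Suc k) \<le> lam ^ Suc k" using less.IH[of "Suc k"] Suc \<open>n = Suc m\<close> by simp
        have h2: "lam * f k \<le> lam ^ k" using less.IH[of k] Suc \<open>n = Suc m\<close> by simp
        have "lam * f n \<le> lam * (f (Suc k) * u + f k * u * (1 - u))"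
          using rec[of k] Suc \<open>n = Suc m\<close> lam by (simp add: mult_left_mono)
        also have "\<dots> = u * (lam * f (Suc k)) + u * (1 - u) * (lam * f k)" by (simp add: algebra_simps)
        also have "\<dots> \<le> u * lam ^ Suc k + u * (1 - u) * lam ^ k"
          using h1 h2 u by (intro add_mono mult_left_mono) auto
        also have "\<dots> = lam ^ k * (u * lam + u * (1 - u))" by (simp add: algebra_simps)
        also have "\<dots> = lam ^ n" using lam(3) Suc \<open>n = Suc m\<close> by (simp add: power2_eq_square)
        finally show ?thesis .
      qed
    qed
  qed
  then show ?thesis by (simp add: f_def)
qed

lemma (in prob_space) nc_event:
  fixes X :: "nat \<Rightarrow> 'a \<Rightarrow> bool"
  assumes ind: "indep_vars (\<lambda>_. count_space UNIV) X UNIV"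
  shows "{\<omega>\<in>space M. nc n (\<lambda>i. X i \<omega>)} \<in> events"
proof -
  have ncr1: "nc n (restrict v {..<n}) = nc n v" for v
    by (auto simp: nc_def)
  have "{\<omega>\<in>space M. nc n (restrict (\<lambda>i. X i \<omega>) {..<n})} = {\<omega>\<in>space M. nc n (\<lambda>i. X i \<omega>)}"
    by (simp add: ncr1)
  with block_event[OF ind, of "nc n" n] show ?thesis by simp
qed



lemma beta_S_sq: "0 \<le> u \<Longrightarrow> u \<le> 1 \<Longrightarrow> sqrt (u * (4 - 3 * u)) * sqrt (u * (4 - 3 * u)) = u * (4 - 3 * u)"
  by (simp add: mult_nonneg_nonneg)

lemma beta_pos: "0 < u \<Longrightarrow> u \<le> 1 \<Longrightarrow> 0 < beta u"
  unfolding beta_def by (simp add: add_pos_nonneg mult_nonneg_nonneg)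

lemma beta_le1: assumes "0 \<le> u" "u \<le> 1" shows "beta u \<le> 1"
proof -
  have e: "(2-u)^2 - u*(4-3*u) = 4*(1-u)^2" by (simp add: power2_eq_square algebra_simps)
  have "u * (4 - 3 * u) \<le> (2 - u)^2" using e zero_le_power2[of "1-u"] by linarith
  then have "sqrt (u * (4 - 3 * u)) \<le> sqrt ((2-u)^2)" by (rule real_sqrt_le_mono)
  also have "\<dots> = 2 - u" using assms by simp
  finally show ?thesis unfolding beta_def by simp
qed

lemma beta_eq: assumes "0 \<le> u" "u \<le> 1" shows "(beta u)^2 = u * beta u + u * (1 - u)"
proof -
  define S where "S = sqrt (u * (4 - 3 * u))"
  have SS: "S * S = u * (4 - 3 * u)" unfolding S_def using beta_S_sq assms by simp
  have b: "beta u = (u + S) / 2" unfolding beta_def S_def by simp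
  have "((u + S)/2)^2 = (u*u + 2*u*S + S*S)/4" by (simp add: power2_eq_square field_simps)
  also have "\<dots> = u * ((u + S) / 2) + u * (1 - u)"  using SS by (simp add: field_simps)
  finally show ?thesis unfolding b .
qed

lemma beta_lower: assumes "0 \<le> u" "u \<le> 1" shows "sqrt u / 2 \<le> beta u"
proof -
  have "u * 1 \<le> u * (4 - 3 * u)" using assms by (intro mult_left_mono) auto
  then have "u \<le> u * (4 - 3 * u)" by simp
  then have "sqrt u \<le> sqrt (u * (4 - 3 * u))" by (rule real_sqrt_le_mono)
  then have "sqrt u \<le> u + sqrt (u * (4 - 3 * u))" using assms by linarith
  then show ?thesis unfolding beta_def by (simp add: divide_right_mono)
qed

lemma sqrt_diff_le: assumes "0 \<le> a" "0 < b" shows "sqrt a - sqrt b \<le> max 0 (a - b) / sqrt b"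
proof (cases "a \<le> b")
  case True
  then have "sqrt a \<le> sqrt b" by simp
  then show ?thesis by (simp add: max_def)
next
  case False
  have sb: "0 < sqrt b" using assms by simp
  have "(sqrt a - sqrt b) * (sqrt a + sqrt b) = a - b" using assms by (simp add: algebra_simps)
  moreover have "sqrt b \<le> sqrt a + sqrt b" using assms by simp
  moreover have "0 \<le> sqrt a - sqrt b" using False by simp
  ultimately have "(sqrt a - sqrt b) * sqrt b \<le> a - b"
    by (metis mult_left_mono)
  then show ?thesis using False sb by (simp add: max_def pos_le_divide_eq)
qed

lemma beta_diff: assumes "0 < u0" "u0 \<le> u1" "u1 \<le> 1"
  shows "beta u1 - beta u0 \<le> 3 * ((u1 - u0) / sqrt u0)"
proof -
  define Y0 where "Y0 = u0 * (4 - 3 * u0)"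
  define Y1 where "Y1 = u1 * (4 - 3 * u1)"
  have "u0 * 1 \<le> u0 * (4 - 3 * u0)" using assms by (intro mult_left_mono) auto
  then have Y0: "u0 \<le> Y0" unfolding Y0_def by simp
  have Y0p: "0 < Y0" using Y0 assms by simp
  have b0: "beta u0 = (u0 + sqrt Y0)/2" unfolding beta_def Y0_def ..
  have b1: "beta u1 = (u1 + sqrt Y1)/2" unfolding beta_def Y1_def ..
  have Yd: "Y1 - Y0 \<le> 4 * (u1 - u0)"
  proof -
    have "Y1 - Y0 = (u1 - u0) * (4 - 3 * (u1 + u0))" unfolding Y0_def Y1_def by (simp add: algebra_simps)
    also have "\<dots> \<le> (u1 - u0) * 4" using assms by (intro mult_left_mono) auto
    finally show ?thesis by simp
  qed
  have su: "sqrt u0 \<le> sqrt Y0" using Y0 by simp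
  have su0: "0 < sqrt u0" using assms by simp
  have "sqrt Y1 - sqrt Y0 \<le> max 0 (Y1 - Y0) / sqrt Y0"
    by (rule sqrt_diff_le) (use assms Y0p in \<open>auto simp: Y1_def\<close>)
  also have "\<dots> \<le> 4 * (u1 - u0) / sqrt Y0" using Yd assms Y0p by (intro divide_right_mono) auto
  also have "\<dots> \<le> 4 * (u1 - u0) / sqrt u0" using assms su su0 by (intro divide_left_mono) auto
  finally have d1: "sqrt Y1 - sqrt Y0 \<le> 4 * (u1 - u0) / sqrt u0" .
  have "sqrt u0 \<le> 1" using assms by simp
  then have d2: "(u1 - u0) \<le> (u1 - u0) / sqrt u0" using assms su0
    by (simp add: le_divide_eq mult_left_le)
  have "beta u1 - beta u0 = ((u1 - u0) + (sqrt Y1 - sqrt Y0)) / 2"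
    unfolding b0 b1 by (simp add: field_simps)
  also have "\<dots> \<le> (5/2) * ((u1 - u0) / sqrt u0)"
  proof -
    define r where "r = (u1 - u0) / sqrt u0"
    have "4 * (u1 - u0) / sqrt u0 = 4 * r" unfolding r_def by simp
    then have "sqrt Y1 - sqrt Y0 \<le> 4 * r" using d1 by simp
    moreover have "u1 - u0 \<le> r" using d2 unfolding r_def .
    ultimately have "u1 - u0 + (sqrt Y1 - sqrt Y0) \<le> 5 * r" by linarith
    then show ?thesis unfolding r_def[symmetric] by simp
  qed
  also have "\<dots> \<le> 3 * ((u1 - u0) / sqrt u0)" using assms su0 by (intro mult_right_mono) auto
  finally show ?thesis .
qed

lemma one_minus_exp_lower: fixes z :: real assumes "0 \<le> z" "z \<le> 1" shows "z / 2 \<le> 1 - exp (- z)"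
proof -
  have "1 + z \<le> exp z" by (rule exp_ge_add_one_self)
  then have "exp (-z) \<le> 1 / (1 + z)" using assms by (simp add: exp_minus field_simps)
  moreover have "z / 2 \<le> 1 - 1 / (1 + z)" using assms mult_left_le[of z z] by (simp add: field_simps)
  ultimately show ?thesis by linarith
qed

lemma one_minus_exp_upper: "1 - exp (- z) \<le> (z::real)"
  using exp_ge_add_one_self[of "-z"] by linarith

lemma exp_diff_le: fixes z0 z1 :: real assumes "0 \<le> z0" "z0 \<le> z1" shows "exp (- z0) - exp (- z1) \<le> z1 - z0"
proof -
  have "exp (- z1) = exp (- z0) * exp (- (z1 - z0))" by (simp add: mult_exp_exp)
  then have "exp (- z0) - exp (- z1) = exp (- z0) * (1 - exp (- (z1 - z0)))" by (simp add: algebra_simps)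
  also have "\<dots> \<le> 1 * (z1 - z0)"
    using assms one_minus_exp_upper[of "z1 - z0"] by (intro mult_mono) auto
  finally show ?thesis by simp
qed

lemma gfun_nonneg: fixes z :: real assumes "0 < z" shows "0 \<le> gfun z"
proof -
  have u: "0 < 1 - exp (- z)" "1 - exp (- z) \<le> 1" using assms by auto
  have "0 < beta (1 - exp (- z))" "beta (1 - exp (- z)) \<le> 1"
    using beta_pos[OF u] beta_le1[of "1 - exp (-z)"] u by auto
  then show ?thesis unfolding gfun_def by simp
qed

lemma key_ineq:
  fixes q A m N B :: real
  assumes q: "0 < q" "q \<le> 1/9"
    and A: "1/sqrt q \<le> A" "A \<le> 1/sqrt q + 1"
    and m: "A \<le> m" "m \<le> A + 3" and N: "m \<le> N" and B: "N + m \<le> B" "B \<le> (1/q) * ln (1/q)"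
  shows "- (N - 1) * gfun (m * q) \<le> - (m - A) * gfun (A * q) - (N - A) * gfun (A * q) + 39 * q powr (-1/2) * ln (1/q)"
proof -
  define s where "s = sqrt q"
  define L where "L = ln (1/q)"
  have s0: "0 < s" using q by (simp add: s_def)
  have s13: "s \<le> 1/3"
  proof -
    have "sqrt q \<le> sqrt (1/9)" using q by (intro real_sqrt_le_mono) auto
    also have "sqrt (1/9) = (1/3::real)" by (simp add: real_sqrt_divide)
    finally show ?thesis by (simp add: s_def)
  qed
  have qs: "q = s * s" using q by (simp add: s_def)
  have L0: "0 \<le> L" using q by (simp add: L_def)
  have A1: "1 \<le> A"
  proof -
    have "3 \<le> 1 / s" using s0 s13 by (simp add: field_simps)
    then show ?thesis using A by (simp add: s_def)
  qed
  define z0 where "z0 = A * q"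
  define z1 where "z1 = m * q"
  have z0s: "s \<le> z0"
  proof -
    have "(1/s) * q \<le> A * q" using A q by (intro mult_right_mono) (auto simp: s_def)
    then show ?thesis unfolding z0_def using qs s0 by (simp add: field_simps)
  qed
  have z01: "z0 \<le> z1" unfolding z0_def z1_def using m q by (intro mult_right_mono) auto
  have z1le: "z1 \<le> 1"
  proof -
    have "z1 \<le> (1/s + 4) * q" unfolding z1_def using m A q by (intro mult_right_mono) (auto simp: s_def)
    also have "\<dots> = s + 4 * (s * s)" using qs s0 by (simp add: field_simps)
    also have "\<dots> \<le> 1/3 + 4 * ((1/3) * (1/3))" using s0 s13 by (intro add_mono mult_left_mono mult_mono) auto
    finally show ?thesis by simp
  qed
  have dz: "z1 - z0 \<le> 3 * q"
  proof -
    have "z1 - z0 = (m - A) * q" unfolding z0_def z1_def by (simp add: algebra_simps)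
    also have "\<dots> \<le> 3 * q" using m q by (intro mult_right_mono) auto
    finally show ?thesis .
  qed
  define u0 where "u0 = 1 - exp (- z0)"
  define u1 where "u1 = 1 - exp (- z1)"
  have u0l: "s / 2 \<le> u0"
    using one_minus_exp_lower[of z0] z0s s0 z01 z1le unfolding u0_def by auto
  have u0p: "0 < u0" using u0l s0 by linarith
  have u01: "u0 \<le> u1" unfolding u0_def u1_def using z01 by simp
  have u1le: "u1 \<le> 1" unfolding u1_def by simp
  have du: "u1 - u0 \<le> 3 * q" using exp_diff_le[of z0 z1] z0s s0 z01 dz unfolding u0_def u1_def by auto
  have b0p: "0 < beta u0" using beta_pos[of u0] u0p u01 u1le by auto
  have b1p: "0 < beta u1" using beta_pos[of u1] u0p u01 u1le by auto
  have b0l: "sqrt u0 / 2 \<le> beta u0" using beta_lower[of u0] u0p u01 u1le by auto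
  have G0def: "gfun (A * q) = - ln (beta u0)" unfolding gfun_def u0_def z0_def ..
  have G1def: "gfun (m * q) = - ln (beta u1)" unfolding gfun_def u1_def z1_def ..
  have G0L: "gfun (A * q) \<le> L"
  proof -
    have "4 * q * q \<le> s / 2"
    proof -
      have "s * s * s \<le> (1/3) * (1/3) * (1/3)" using s0 s13 by (intro mult_mono) auto
      then have "8 * (s * s * s) \<le> 1" by simp
      then have "8 * (s * s * s) * s \<le> 1 * s" using s0 by (intro mult_right_mono) auto
      then show ?thesis unfolding qs by (simp add: algebra_simps)
    qed
    then have "4 * q * q \<le> u0" using u0l by simp
    then have "sqrt (4 * q * q) \<le> sqrt u0" by (rule real_sqrt_le_mono)
    moreover have "sqrt (4 * q * q) = 2 * q" using q by (simp add: real_sqrt_mult)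
    ultimately have "q \<le> beta u0" using b0l by simp
    then have "ln q \<le> ln (beta u0)" using q by simp
    then show ?thesis unfolding G0def L_def using q by (simp add: ln_div)
  qed
  have G0n: "0 \<le> gfun (A * q)" using gfun_nonneg[of "A*q"] A1 q by simp
  have G1n: "0 \<le> gfun (m * q)" using gfun_nonneg[of "m*q"] A1 m q by simp
  have Gd: "gfun (A * q) - gfun (m * q) \<le> 36 * s"
  proof -
    have "gfun (A * q) - gfun (m * q) = ln (beta u1 / beta u0)"
      unfolding G0def G1def using b0p b1p by (simp add: ln_div)
    also have "\<dots> \<le> beta u1 / beta u0 - 1" using b0p b1p by (intro ln_le_minus_one) auto
    also have "\<dots> = (beta u1 - beta u0) / beta u0" using b0p by (simp add: field_simps)
    also have "\<dots> \<le> (3 * ((u1 - u0) / sqrt u0)) / beta u0"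
      using beta_diff[OF u0p u01 u1le] b0p by (intro divide_right_mono) auto
    also have "\<dots> \<le> (3 * ((u1 - u0) / sqrt u0)) / (sqrt u0 / 2)"
      using b0l u0p u01 b0p by (intro divide_left_mono) auto
    also have "\<dots> = 6 * (u1 - u0) / u0"
      using u0p by (simp add: field_simps)
    also have "\<dots> \<le> 6 * (3 * q) / u0" using du u0p by (intro divide_right_mono) auto
    also have "\<dots> \<le> 6 * (3 * q) / (s / 2)" using u0l s0 q by (intro divide_left_mono) auto
    also have "\<dots> = 36 * s" using qs s0 by (simp add: field_simps)
    finally show ?thesis .
  qed
  define G0 where "G0 = gfun (A * q)"
  define G1 where "G1 = gfun (m * q)"
  have NA: "0 \<le> N - A" using m N by linarith
  have NAB: "N - A \<le> L / q"
  proof -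
    have "(1/q) * ln (1/q) = L / q" unfolding L_def by simp
    then show ?thesis using B m A1 by linarith
  qed
  have t1: "(N - A) * G1 \<le> (N - 1) * G1" using A1 G1n unfolding G1_def by (intro mult_right_mono) auto
  have t2: "(N - A) * (G0 - G1) \<le> (N - A) * (36 * s)" using Gd NA unfolding G0_def G1_def by (intro mult_left_mono) auto
  have t3: "(N - A) * (36 * s) \<le> (L / q) * (36 * s)" using NAB s0 by (intro mult_right_mono) auto
  have t4: "(L / q) * (36 * s) = 36 * (L / s)" using qs s0 by (simp add: field_simps)
  have t5: "(m - A) * G0 \<le> 3 * L" using m G0L G0n L0 unfolding G0_def by (intro mult_mono) auto
  have t6: "L \<le> L / s" using L0 s0 s13 by (simp add: le_divide_eq mult_left_le)
  have t7: "q powr (-1/2) = 1 / s"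
  proof -
    have "q powr (-1/2) = q powr (- (1/2))" by simp
    also have "\<dots> = inverse (q powr (1/2))" by (rule powr_minus)
    also have "\<dots> = inverse s" using q by (simp add: s_def powr_half_sqrt)
    finally show ?thesis by (simp add: inverse_eq_divide)
  qed
  have "- (N - 1) * G1 \<le> - (m - A) * G0 - (N - A) * G0 + 39 * (L / s)"
  proof -
    have e: "(N - A) * (G0 - G1) = (N - A) * G0 - (N - A) * G1" by (simp add: algebra_simps)
    show ?thesis using t1 t2 t3 t4 t5 t6 e by linarith
  qed
  then show ?thesis unfolding G0_def G1_def L_def t7 by simp
qed



lemma Pp_prob_space: "prob_space (Pp p)"
  unfolding Pp_def by (rule prob_space_PiM) (rule prob_space_measure_pmf)

lemma Pp_indep: "prob_space.indep_vars (Pp p) (\<lambda>x. measure_pmf (site_pmf p x)) (\<lambda>x \<omega>. \<omega> x) UNIV"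
proof -
  interpret P: prob_space "Pp p" by (rule Pp_prob_space)
  have rv: "\<And>i. P.random_variable (measure_pmf (site_pmf p i)) (\<lambda>\<omega>. \<omega> i)"
    unfolding Pp_def by (rule measurable_component_singleton) simp
  have l: "distr (Pp p) (PiM UNIV (\<lambda>i. measure_pmf (site_pmf p i))) (\<lambda>x. \<lambda>i\<in>UNIV. x i) = Pp p"
  proof -
    have "(\<lambda>x. restrict x UNIV) = (\<lambda>x::(int\<times>int) \<Rightarrow> site_state. x)" by (auto simp: restrict_def fun_eq_iff)
    then show ?thesis by (simp add: Pp_def)
  qed
  have r: "PiM UNIV (\<lambda>i. distr (Pp p) (measure_pmf (site_pmf p i)) (\<lambda>x. x i)) = Pp p"
    unfolding Pp_def
    by (intro PiM_cong refl distr_PiM_component) (auto simp: prob_space_measure_pmf)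
  show ?thesis
    by (subst P.indep_vars_iff_distr_eq_PiM[OF _ rv]) (use l r in auto)
qed

lemma Pp_rows_indep:
  assumes fin: "\<And>i. finite (K i)" and disj: "disjoint_family K"
  shows "prob_space.indep_vars (Pp p) (\<lambda>_. count_space UNIV) (\<lambda>i \<omega>. \<forall>x\<in>K i. \<omega> x = Empty) UNIV"
proof -
  interpret P: prob_space "Pp p" by (rule Pp_prob_space)
  have "P.indep_vars (\<lambda>j. PiM (K j) (\<lambda>x. measure_pmf (site_pmf p x))) (\<lambda>j \<omega>. restrict (\<lambda>i. \<omega> i) (K j)) UNIV"
    by (rule P.indep_vars_restrict[OF Pp_indep]) (use disj in auto)
  then have "P.indep_vars (\<lambda>_. count_space UNIV) (\<lambda>j \<omega>. (\<lambda>g. \<forall>x\<in>K j. g x = Empty) (restrict (\<lambda>i. \<omega> i) (K j))) UNIV"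
    by (rule P.indep_vars_compose2) (rule pred_allEmpty[OF fin])
  then show ?thesis by simp
qed

lemma site_empty: "0 \<le> p \<Longrightarrow> p \<le> 1 \<Longrightarrow> measure (measure_pmf (site_pmf p x)) {Empty} = 1 - p"
proof -
  assume p: "0 \<le> p" "p \<le> 1"
  have "(\<lambda>b. if b then (if x = (0, 0) then Active else Occupied) else Empty) -` {Empty} = {False}"
    by auto
  then show ?thesis using p
    by (simp add: measure_pmf_single site_pmf_def pmf_map measure_pmf_single)
qed

lemma Pp_allEmpty:
  assumes "finite J" "0 \<le> p" "p \<le> 1"
  shows "measure (Pp p) {\<omega>\<in>space (Pp p). \<forall>x\<in>J. \<omega> x = Empty} = (1-p)^card J"
proof -
  have e: "{\<omega>\<in>space (Pp p). \<forall>x\<in>J. \<omega> x = Empty} = prod_emb UNIV (\<lambda>x. measure_pmf (site_pmf p x)) J (PiE J (\<lambda>_. {Empty}))"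
    by (auto simp: prod_emb_def Pp_def space_PiM restrict_def fun_eq_iff) metis
  have "emeasure (Pp p) {\<omega>\<in>space (Pp p). \<forall>x\<in>J. \<omega> x = Empty} = (\<Prod>x\<in>J. emeasure (measure_pmf (site_pmf p x)) {Empty})"
    unfolding e unfolding Pp_def by (rule emeasure_PiM_emb) (auto simp: assms prob_space_measure_pmf)
  also have "\<dots> = (\<Prod>x\<in>J. ennreal (1-p))"
    using site_empty[OF assms(2,3)] by (simp add: measure_pmf.emeasure_eq_measure)
  also have "\<dots> = ennreal ((1-p)^card J)" using assms by (simp add: prod_ennreal ennreal_power)
  finally show ?thesis using assms by (simp add: measure_def)
qed

lemma G_generic:
  fixes K :: "nat \<Rightarrow> (int\<times>int) set" and R :: rect
  assumes fin: "\<And>i. finite (K i)" and disj: "disjoint_family K" and card: "\<And>i. card (K i) = m"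
    and m: "0 < m" and H: "1 \<le> H" and p: "0 < p" "p < 1"
    and sub: "G_event R \<subseteq> {\<omega>. nc H (\<lambda>i. \<forall>x\<in>K i. \<omega> x = Empty)}"
  shows "measure (Pp p) (G_event R) \<le> exp (- (real H - 1) * gfun (real m * qq p))"
proof -
  interpret P: prob_space "Pp p" by (rule Pp_prob_space)
  note ind = Pp_rows_indep[OF fin disj, of p]
  define u where "u = 1 - (1-p)^m"
  have pm1: "(1-p)^m \<le> (1-p)^1" using p m by (intro power_decreasing) auto
  have u: "0 < u" "u \<le> 1" unfolding u_def using pm1 p by auto
  define lam where "lam = beta u"
  have lam: "0 < lam" "lam \<le> 1" "lam^2 = u*lam + u*(1-u)"
    unfolding lam_def using beta_pos[OF u] beta_le1[of u] beta_eq[of u] u by auto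
  have spc: "space (Pp p) = UNIV" by (simp add: Pp_def space_PiM)
  have pX: "P.prob {\<omega>\<in>space (Pp p). (\<forall>x\<in>K i. \<omega> x = Empty) = True} = 1 - u" for i
    using Pp_allEmpty[OF fin[of i], of p] p card unfolding u_def by simp
  have bnd: "lam * P.prob {\<omega>\<in>space (Pp p). nc H (\<lambda>i. \<forall>x\<in>K i. \<omega> x = Empty)} \<le> lam ^ H"
    by (rule P.no_consec_bound[OF ind pX]) (use u lam in auto)
  have ev: "{\<omega>\<in>space (Pp p). nc H (\<lambda>i. \<forall>x\<in>K i. \<omega> x = Empty)} \<in> P.events"
    by (rule P.nc_event[OF ind])
  have "P.prob (G_event R) \<le> P.prob {\<omega>\<in>space (Pp p). nc H (\<lambda>i. \<forall>x\<in>K i. \<omega> x = Empty)}"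
    by (rule P.finite_measure_mono[OF _ ev]) (use sub spc in auto)
  then have "lam * P.prob (G_event R) \<le> lam ^ H" using bnd lam by (meson mult_left_mono order_trans less_imp_le)
  moreover have "lam ^ H = lam * lam ^ (H - 1)" using H by (cases H) auto
  ultimately have pr: "P.prob (G_event R) \<le> lam ^ (H - 1)" using lam by simp
  have q1: "(1-p)^m = exp (- (real m * qq p))"
  proof -
    have "exp (- (real m * qq p)) = exp (real m * ln (1-p))" by (simp add: qq_def)
    also have "\<dots> = exp (ln (1-p)) ^ m" by (simp add: exp_of_nat_mult)
    also have "\<dots> = (1-p)^m" using p by simp
    finally show ?thesis by simp
  qed
  have lamg: "lam = exp (- gfun (real m * qq p))"
    unfolding lam_def u_def gfun_def q1 using lam(1) unfolding lam_def u_def q1 by simp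
  have "lam ^ (H - 1) = exp (real (H - 1) * (- gfun (real m * qq p)))"
    unfolding lamg by (rule exp_of_nat_mult[symmetric])
  also have "\<dots> = exp (- (real H - 1) * gfun (real m * qq p))" using H by (simp add: of_nat_diff algebra_simps)
  finally show ?thesis using pr by simp
qed



lemma G_rows:
  assumes ac: "a \<le> c" and bd: "b \<le> d" and p: "0 < p" "p < 1"
  shows "measure (Pp p) (G_event (a,b,c,d)) \<le> exp (- (real_of_int (d-b+1) - 1) * gfun (real_of_int (c-a+1) * qq p))"
proof -
  define K where "K i = {a..c} \<times> {b + int i}" for i :: nat
  have fin: "finite (K i)" for i unfolding K_def by simp
  have disj: "disjoint_family K" unfolding K_def disjoint_family_on_def by auto
  have card: "card (K i) = nat (c-a+1)" for i unfolding K_def by (simp add: card_cartesian_product)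
  have sub: "G_event (a,b,c,d) \<subseteq> {\<omega>. nc (nat (d-b+1)) (\<lambda>i. \<forall>x\<in>K i. \<omega> x = Empty)}"
  proof
    fix \<omega> assume g: "\<omega> \<in> G_event (a,b,c,d)"
    show "\<omega> \<in> {\<omega>. nc (nat (d-b+1)) (\<lambda>i. \<forall>x\<in>K i. \<omega> x = Empty)}"
    proof (rule ccontr)
      assume "\<omega> \<notin> {\<omega>. nc (nat (d-b+1)) (\<lambda>i. \<forall>x\<in>K i. \<omega> x = Empty)}"
      then obtain i where i: "Suc i < nat (d-b+1)" and r1: "\<forall>x\<in>K i. \<omega> x = Empty" and r2: "\<forall>x\<in>K (Suc i). \<omega> x = Empty"
        by (auto simp: nc_def)
      have "double_gap_rows (a,b,c,d) \<omega>"
        unfolding double_gap_rows_def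
      proof (simp, intro exI[of _ "b + int i"] conjI ballI)
        show "b \<le> b + int i" by simp
        show "b + int i + 1 \<le> d" using i by linarith
        fix x assume "x \<in> {a..c}"
        then have "(x, b + int i) \<in> K i" "(x, b + int i + 1) \<in> K (Suc i)" unfolding K_def by auto
        then show "\<omega> (x, b + int i) = Empty" "\<omega> (x, b + int i + 1) = Empty"
          using r1 r2 by blast+
      qed
      then show False using g by (simp add: G_event_def)
    qed
  qed
  have "measure (Pp p) (G_event (a,b,c,d)) \<le> exp (- (real (nat (d-b+1)) - 1) * gfun (real (nat (c-a+1)) * qq p))"
    by (rule G_generic[OF fin disj card _ _ p sub]) (use ac bd in auto)
  then show ?thesis using ac bd by simp
qed

lemma G_cols:
  assumes ac: "a \<le> c" and bd: "b \<le> d" and p: "0 < p" "p < 1"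
  shows "measure (Pp p) (G_event (a,b,c,d)) \<le> exp (- (real_of_int (c-a+1) - 1) * gfun (real_of_int (d-b+1) * qq p))"
proof -
  define K where "K i = {a + int i} \<times> {b..d}" for i :: nat
  have fin: "finite (K i)" for i unfolding K_def by simp
  have disj: "disjoint_family K" unfolding K_def disjoint_family_on_def by auto
  have card: "card (K i) = nat (d-b+1)" for i unfolding K_def by (simp add: card_cartesian_product)
  have sub: "G_event (a,b,c,d) \<subseteq> {\<omega>. nc (nat (c-a+1)) (\<lambda>i. \<forall>x\<in>K i. \<omega> x = Empty)}"
  proof
    fix \<omega> assume g: "\<omega> \<in> G_event (a,b,c,d)"
    show "\<omega> \<in> {\<omega>. nc (nat (c-a+1)) (\<lambda>i. \<forall>x\<in>K i. \<omega> x = Empty)}"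
    proof (rule ccontr)
      assume "\<omega> \<notin> {\<omega>. nc (nat (c-a+1)) (\<lambda>i. \<forall>x\<in>K i. \<omega> x = Empty)}"
      then obtain i where i: "Suc i < nat (c-a+1)" and r1: "\<forall>x\<in>K i. \<omega> x = Empty" and r2: "\<forall>x\<in>K (Suc i). \<omega> x = Empty"
        by (auto simp: nc_def)
      have "double_gap_cols (a,b,c,d) \<omega>"
        unfolding double_gap_cols_def
      proof (simp, intro exI[of _ "a + int i"] conjI ballI)
        show "a \<le> a + int i" by simp
        show "a + int i + 1 \<le> c" using i by linarith
        fix y assume "y \<in> {b..d}"
        then have "(a + int i, y) \<in> K i" "(a + int i + 1, y) \<in> K (Suc i)" unfolding K_def by auto
        then show "\<omega> (a + int i, y) = Empty" "\<omega> (a + int i + 1, y) = Empty"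
          using r1 r2 by blast+
      qed
      then show False using g by (simp add: G_event_def)
    qed
  qed
  have "measure (Pp p) (G_event (a,b,c,d)) \<le> exp (- (real (nat (c-a+1)) - 1) * gfun (real (nat (d-b+1)) * qq p))"
    by (rule G_generic[OF fin disj card _ _ p sub]) (use ac bd in auto)
  then show ?thesis using ac bd by simp
qed



lemma rect_mono:
  assumes sub: "rset R \<subseteq> rset R'" and ne: "rset R \<noteq> {}"
  shows "rwidth R \<le> rwidth R'" "rheight R \<le> rheight R'"
proof -
  obtain a b c d where R: "R = (a,b,c,d)" by (cases R) auto
  obtain a' b' c' d' where R': "R' = (a',b',c',d')" by (cases R') auto
  have le: "a \<le> c" "b \<le> d" using ne by (auto simp: R rset_def)
  have "(a,b) \<in> rset R" "(c,d) \<in> rset R" using le by (auto simp: R rset_def)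
  then have "(a,b) \<in> rset R'" "(c,d) \<in> rset R'" using sub by auto
  then have "a' \<le> a" "b' \<le> b" "c \<le> c'" "d \<le> d'" by (auto simp: R' rset_def)
  then show "rwidth R \<le> rwidth R'" "rheight R \<le> rheight R'" by (auto simp: R R' rwidth_def rheight_def)
qed

lemma good_chain:
  assumes g: "good_seq p n R" and k: "1 \<le> k" "k \<le> n"
  shows "rset (R 1) \<subseteq> rset (R k)"
  using k(1,2)
proof (induction k rule: dec_induct)
  case base then show ?case by simp
next
  case (step j)
  have "rset (R j) \<subseteq> rset (R (j + 1))" using g step by (auto simp: good_seq_def)
  then show ?case using step by auto
qed

lemma qq_bounds: assumes "0 < p" "p < 1/10" shows "0 < qq p" "qq p \<le> 1/9"
proof -
  have "ln (1 - p) < 0" using assms by simp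
  then show "0 < qq p" by (simp add: qq_def)
  have "qq p = ln (1 / (1 - p))" using assms by (simp add: qq_def ln_div)
  also have "\<dots> \<le> 1 / (1 - p) - 1" using assms by (intro ln_le_minus_one) auto
  also have "\<dots> \<le> 1/9" using assms by (simp add: field_simps)
  finally show "qq p \<le> 1/9" .
qed

theorem lemma13:
  shows "\<exists>C5::real. \<forall>p::real. 0 < p \<and> p < 0.1 \<longrightarrow>
    (\<forall>(n::nat) (R::nat \<Rightarrow> rect). good_seq p n R \<longrightarrow>
      (let q = qq p; a0 = real_of_int (AA p); b0 = real_of_int (AA p);
           s0 = real_of_int (rwidth (R 1)) - a0; t0 = real_of_int (rheight (R 1)) - b0
       in measure (Pp p) (G_event (R 1))
          \<le> exp (- s0 * gfun (b0 * q) - t0 * gfun (a0 * q) + C5 * q powr (-1/2) * ln (1 / q))))"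
proof (intro exI[of _ 39] allI impI)
  fix p :: real and n :: nat and R :: "nat \<Rightarrow> rect"
  assume p0: "0 < p \<and> p < 0.1" and g: "good_seq p n R"
  have p: "0 < p" "p < 1/10" using p0 by auto
  define q where "q = qq p"
  have q: "0 < q" "q \<le> 1/9" using qq_bounds[OF p] by (auto simp: q_def)
  define A where "A = real_of_int (AA p)"
  define B where "B = real_of_int (BB p)"
  have A: "1 / sqrt q \<le> A" "A \<le> 1 / sqrt q + 1"
    unfolding A_def AA_def q_def using ceiling_correct[of "1 / sqrt (qq p)"] by auto
  have B: "B \<le> (1/q) * ln (1/q)" unfolding B_def BB_def q_def by simp
  obtain a b c d where R1: "R 1 = (a,b,c,d)" by (cases "R 1") auto
  have n1: "1 \<le> n" using g by (simp add: good_seq_def)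
  have o: "(0,0) \<in> rset (R 1)" using g by (simp add: good_seq_def)
  then have ac: "a \<le> c" and bd: "b \<le> d" unfolding R1 rset_def by auto
  have sub: "rset (R 1) \<subseteq> rset (R n)" by (rule good_chain[OF g n1 order_refl])
  have wh: "rwidth (R 1) \<le> rwidth (R n)" "rheight (R 1) \<le> rheight (R n)"
    using rect_mono[OF sub] o by auto
  have sumB: "rwidth (R 1) + rheight (R 1) \<le> BB p" using g wh by (simp add: good_seq_def)
  have mn: "min (rwidth (R 1)) (rheight (R 1)) \<in> {AA p..AA p + 3}" using g by (simp add: good_seq_def)
  define w where "w = real_of_int (c - a + 1)"
  define h where "h = real_of_int (d - b + 1)"
  have rw: "real_of_int (rwidth (R 1)) = w" unfolding R1 rwidth_def w_def by simp
  have rh: "real_of_int (rheight (R 1)) = h" unfolding R1 rheight_def h_def by simp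
  have whB: "w + h \<le> B" using sumB unfolding B_def rw[symmetric] rh[symmetric] by linarith
  have mnr: "A \<le> min w h" "min w h \<le> A + 3"
    using mn unfolding A_def rw[symmetric] rh[symmetric] by (auto simp: min_def split: if_splits)
  have goal: "measure (Pp p) (G_event (R 1)) \<le> exp (- (w - A) * gfun (A * q) - (h - A) * gfun (A * q) + 39 * q powr (-1/2) * ln (1 / q))"
  proof (cases "w \<le> h")
    case True
    have m: "A \<le> w" "w \<le> A + 3" using mnr True by (auto simp: min_def)
    have pr: "measure (Pp p) (G_event (R 1)) \<le> exp (- (h - 1) * gfun (w * q))"
      using G_rows[OF ac bd, of p] p unfolding R1 w_def h_def q_def by simp
    have "- (h - 1) * gfun (w * q) \<le> - (w - A) * gfun (A * q) - (h - A) * gfun (A * q) + 39 * q powr (-1/2) * ln (1/q)"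
      by (rule key_ineq[OF q A m True _ B]) (use whB in linarith)
    then show ?thesis using pr by (meson exp_le_cancel_iff order_trans)
  next
    case False
    have m: "A \<le> h" "h \<le> A + 3" using mnr False by (auto simp: min_def)
    have pr: "measure (Pp p) (G_event (R 1)) \<le> exp (- (w - 1) * gfun (h * q))"
      using G_cols[OF ac bd, of p] p unfolding R1 w_def h_def q_def by simp
    have "- (w - 1) * gfun (h * q) \<le> - (h - A) * gfun (A * q) - (w - A) * gfun (A * q) + 39 * q powr (-1/2) * ln (1/q)"
      by (rule key_ineq[OF q A m _ _ B]) (use whB False in linarith)+
    then have "- (w - 1) * gfun (h * q) \<le> - (w - A) * gfun (A * q) - (h - A) * gfun (A * q) + 39 * q powr (-1/2) * ln (1/q)"
      by linarith
    then show ?thesis using pr by (meson exp_le_cancel_iff order_trans)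
  qed
  show "let q = qq p; a0 = real_of_int (AA p); b0 = real_of_int (AA p);
           s0 = real_of_int (rwidth (R 1)) - a0; t0 = real_of_int (rheight (R 1)) - b0
       in measure (Pp p) (G_event (R 1))
          \<le> exp (- s0 * gfun (b0 * q) - t0 * gfun (a0 * q) + 39 * q powr (-1/2) * ln (1 / q))"
    unfolding Let_def rw rh using goal by (simp add: A_def q_def)
qed


end
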